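(* Let $\mathcal H=\bigoplus_{n=1}^\infty\mathbb C^n$, let $\{e_{n,i}\}_{i=1}^n$ be the canonical orthonormal basis of $\mathbb C^n$, and let $V=\bigoplus_{n=1}^\infty V_n$, where $V_n\in M_n(\mathbb C)$ is the upper shift matrix, $V_ne_{n,i}=e_{n,i-1}$ (with $e_{n,0}=0$). Then for every nonzero Hilbert space $\mathcal K$ there is no idempotent $P\in\mathcal B(\mathcal K\otimes\mathcal H)$ such that $P(I\otimes V)=(I\otimes V)P$ and $I\otimes V-P$ is invertible; i.e. $I\otimes V$ is not strongly clean in $\mathcal B(\mathcal K\otimes\mathcal H)$.
   Context: An element $T$ of a unital ring is strongly clean if $T=U+P$ with $U$ invertible, $P$ idempotent and $PT=TP$. *)

theory Defs
  imports "HOL-Analysis.Analysis"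
begin

text \<open>Every Hilbert space is unitarily isomorphic to some l2(J),
  and l2(J) tensor l2(S) is l2(J x S).\<close>

definition l2 :: "'a set \<Rightarrow> ('a \<Rightarrow> complex) set" where
  "l2 S = {f. (\<forall>x. x \<notin> S \<longrightarrow> f x = 0) \<and> (\<lambda>x. (cmod (f x))\<^sup>2) summable_on S}"

definition l2norm :: "'a set \<Rightarrow> ('a \<Rightarrow> complex) \<Rightarrow> real" where
  "l2norm S f = sqrt (infsum (\<lambda>x. (cmod (f x))\<^sup>2) S)"

definition bounded_op :: "'a set \<Rightarrow> (('a \<Rightarrow> complex) \<Rightarrow> ('a \<Rightarrow> complex)) \<Rightarrow> bool" where
  "bounded_op S T \<longleftrightarrow>
     (\<forall>f\<in>l2 S. T f \<in> l2 S) \<and>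
     (\<forall>f\<in>l2 S. \<forall>g\<in>l2 S. T (\<lambda>x. f x + g x) = (\<lambda>x. T f x + T g x)) \<and>
     (\<forall>f\<in>l2 S. \<forall>c. T (\<lambda>x. c * f x) = (\<lambda>x. c * T f x)) \<and>
     (\<exists>C. \<forall>f\<in>l2 S. l2norm S (T f) \<le> C * l2norm S f)"

definition invertible_op :: "'a set \<Rightarrow> (('a \<Rightarrow> complex) \<Rightarrow> ('a \<Rightarrow> complex)) \<Rightarrow> bool" where
  "invertible_op S T \<longleftrightarrow> (\<exists>W. bounded_op S W \<and>
     (\<forall>f\<in>l2 S. W (T f) = f \<and> T (W f) = f))"

definition idempotent_op :: "'a set \<Rightarrow> (('a \<Rightarrow> complex) \<Rightarrow> ('a \<Rightarrow> complex)) \<Rightarrow> bool" where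
  "idempotent_op S P \<longleftrightarrow> (\<forall>f\<in>l2 S. P (P f) = P f)"

definition strongly_clean_op :: "'a set \<Rightarrow> (('a \<Rightarrow> complex) \<Rightarrow> ('a \<Rightarrow> complex)) \<Rightarrow> bool" where
  "strongly_clean_op S T \<longleftrightarrow> (\<exists>U P. bounded_op S U \<and> bounded_op S P \<and>
      invertible_op S U \<and> idempotent_op S P \<and>
      (\<forall>f\<in>l2 S. P (T f) = T (P f)) \<and>
      (\<forall>f\<in>l2 S. T f = (\<lambda>x. U f x + P f x)))"

text \<open>Index set of H = direct sum of C^n, n \<ge> 1: pairs (n,i) with 1 \<le> i \<le> n.\<close>

definition Hidx :: "(nat \<times> nat) set" where
  "Hidx = {(n, i). 1 \<le> i \<and> i \<le> n}"

text \<open>I \<otimes> V on l2(J \<times> Hidx): (V_n e_{n,i} = e_{n,i-1}, e_{n,0} = 0), i.e.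
  in coordinates (V f)(n,i) = f(n,i+1) for i < n and 0 for i = n.\<close>

definition IV :: "(('j \<times> (nat \<times> nat)) \<Rightarrow> complex) \<Rightarrow> (('j \<times> (nat \<times> nat)) \<Rightarrow> complex)" where
  "IV f = (\<lambda>(j, (n, i)). if (n, i) \<in> Hidx \<and> i < n then f (j, (n, Suc i)) else 0)"

end

theory Submission
  imports Defs
begin

lemma l2_fin:
  assumes "finite A" "A \<subseteq> S" "\<And>z. z \<notin> A \<Longrightarrow> f z = 0"
  shows "f \<in> l2 S"
proof -
  have "(\<lambda>x. (cmod (f x))\<^sup>2) summable_on A" using assms(1) by simp
  then have "(\<lambda>x. (cmod (f x))\<^sup>2) summable_on S"
    by (rule summable_on_cong_neutral[THEN iffD1, rotated -1]) (use assms in auto)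
  then show ?thesis using assms unfolding l2_def by auto
qed

lemma l2norm_fin:
  assumes "finite A" "A \<subseteq> S" "\<And>z. z \<notin> A \<Longrightarrow> f z = 0"
  shows "l2norm S f = sqrt (\<Sum>z\<in>A. (cmod (f z))\<^sup>2)"
proof -
  have "infsum (\<lambda>x. (cmod (f x))\<^sup>2) S = infsum (\<lambda>x. (cmod (f x))\<^sup>2) A"
    by (rule infsum_cong_neutral) (use assms in auto)
  then show ?thesis using assms(1) unfolding l2norm_def by simp
qed

lemma sq2: "((a::real) + b)\<^sup>2 \<le> 2 * a\<^sup>2 + 2 * b\<^sup>2"
proof -
  have "0 \<le> (a - b)\<^sup>2" by simp
  then show ?thesis by (simp add: power2_sum power2_diff)
qed

lemma l2_diff:
  assumes "f \<in> l2 S" "g \<in> l2 S"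
  shows "(\<lambda>z. f z - g z) \<in> l2 S"
proof -
  have sf: "(\<lambda>x. (cmod (f x))\<^sup>2) summable_on S" and sg: "(\<lambda>x. (cmod (g x))\<^sup>2) summable_on S"
    using assms unfolding l2_def by auto
  have "(\<lambda>x. 2 * (cmod (f x))\<^sup>2 + 2 * (cmod (g x))\<^sup>2) summable_on S"
    by (intro summable_on_add summable_on_cmult_right sf sg)
  moreover have "(cmod (f x - g x))\<^sup>2 \<le> 2 * (cmod (f x))\<^sup>2 + 2 * (cmod (g x))\<^sup>2" for x
  proof -
    have "cmod (f x - g x) \<le> cmod (f x) + cmod (g x)" by (rule norm_triangle_ineq4)
    then have "(cmod (f x - g x))\<^sup>2 \<le> (cmod (f x) + cmod (g x))\<^sup>2"
      by (simp add: power_mono)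
    also have "\<dots> \<le> 2 * (cmod (f x))\<^sup>2 + 2 * (cmod (g x))\<^sup>2"
      by (rule sq2)
    finally show ?thesis .
  qed
  ultimately have "(\<lambda>x. (cmod (f x - g x))\<^sup>2) summable_on S"
    by (rule summable_on_comparison_test) auto
  then show ?thesis using assms unfolding l2_def by auto
qed

definition xv :: "'j \<Rightarrow> nat \<Rightarrow> nat \<Rightarrow> ('j \<times> (nat \<times> nat)) \<Rightarrow> complex" where
  "xv j0 n k = (\<lambda>(j, (m, i)). if j = j0 \<and> m = n \<and> 1 \<le> i \<and> i + k \<le> n then 1 else 0)"

lemma IV_xv: "IV (xv j0 n k) = xv j0 n (Suc k)"
  by (rule ext) (auto simp: IV_def xv_def Hidx_def)

lemma xv_n: "xv j0 n n = (\<lambda>_. 0)"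
  by (rule ext) (auto simp: xv_def)

lemma xv_l2:
  assumes "j0 \<in> J"
  shows "xv j0 n k \<in> l2 (J \<times> Hidx)"
  by (rule l2_fin[where A="(\<lambda>i. (j0, (n, i))) ` {1..n}"]) (use assms in \<open>auto simp: xv_def Hidx_def\<close>)

lemma IV_diff: "IV (\<lambda>z. a z - b z) = (\<lambda>z. IV a z - IV b z)"
  by (rule ext) (auto simp: IV_def)

lemma IV_zero: "IV (\<lambda>_. 0) = (\<lambda>_. 0)"
  by (rule ext) (auto simp: IV_def)

lemma main:
  fixes J :: "'j set" and P :: "(('j \<times> (nat \<times> nat)) \<Rightarrow> complex) \<Rightarrow> _"
  assumes j0: "j0 \<in> J"
    and bP: "bounded_op (J \<times> Hidx) P" and iP: "idempotent_op (J \<times> Hidx) P"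
    and cP: "\<forall>f\<in>l2 (J \<times> Hidx). P (IV f) = IV (P f)"
    and inv: "invertible_op (J \<times> Hidx) (\<lambda>f x. IV f x - P f x)"
  shows False
proof -
  define S where "S = J \<times> Hidx"
  obtain W where bW: "bounded_op S W" and
    WT: "\<And>f. f \<in> l2 S \<Longrightarrow> W (IV f - P f) = f"
    using inv unfolding invertible_op_def S_def fun_diff_def by blast
  obtain C where C: "\<And>f. f \<in> l2 S \<Longrightarrow> l2norm S (W f) \<le> C * l2norm S f"
    using bW unfolding bounded_op_def by blast
  have Pl2: "\<And>f. f \<in> l2 S \<Longrightarrow> P f \<in> l2 S" using bP unfolding bounded_op_def S_def by blast
  have Padd: "\<And>f g. f \<in> l2 S \<Longrightarrow> g \<in> l2 S \<Longrightarrow> P (\<lambda>x. f x + g x) = (\<lambda>x. P f x + P g x)"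
    using bP unfolding bounded_op_def S_def by blast
  have Pmul: "\<And>f c. f \<in> l2 S \<Longrightarrow> P (\<lambda>x. c * f x) = (\<lambda>x. c * P f x)"
    using bP unfolding bounded_op_def S_def by blast
  have PP: "\<And>f. f \<in> l2 S \<Longrightarrow> P (P f) = P f" using iP unfolding idempotent_op_def S_def by blast
  have z2: "(\<lambda>_. 0) \<in> l2 S" unfolding l2_def by simp
  have P0: "P (\<lambda>_. 0) = (\<lambda>_. 0)" using Pmul[OF z2, of 0] by simp
  have W0: "W (\<lambda>_. 0) = (\<lambda>_. 0)"
    using WT[OF z2] by (simp add: P0 IV_zero fun_diff_def)
  have xl2: "\<And>k. xv j0 n k \<in> l2 S" for n using xv_l2[OF j0] S_def by simp
  have PIV: "\<And>k. P (xv j0 n (Suc k)) = IV (P (xv j0 n k))" for n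
    using cP xl2 IV_xv S_def by metis
  define d where "d n k = (\<lambda>z. xv j0 n k z - P (xv j0 n k) z)" for n k
  have dl2: "d n k \<in> l2 S" for n k unfolding d_def by (intro l2_diff xl2 Pl2)
  have Pd: "P (d n k) = (\<lambda>_. 0)" for n k
  proof -
    have u: "(\<lambda>x. d n k x + P (xv j0 n k) x) = xv j0 n k" unfolding d_def by simp
    have "P (\<lambda>x. d n k x + P (xv j0 n k) x) = (\<lambda>x. P (d n k) x + P (P (xv j0 n k)) x)"
      by (rule Padd[OF dl2 Pl2[OF xl2]])
    then have e: "P (xv j0 n k) = (\<lambda>x. P (d n k) x + P (xv j0 n k) x)"
      unfolding u PP[OF xl2] .
    show ?thesis
    proof
      fix x show "P (d n k) x = 0" using fun_cong[OF e, of x] by simp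
    qed
  qed
  have IVd: "IV (d n k) = d n (Suc k)" for n k
    unfolding d_def IV_diff IV_xv using PIV by simp
  have step: "d n k = (\<lambda>_. 0)" if "d n (Suc k) = (\<lambda>_. 0)" for n k
  proof -
    have "IV (d n k) - P (d n k) = (\<lambda>_. 0)" using IVd that Pd by (simp add: fun_diff_def)
    then show ?thesis using WT[OF dl2] W0 by metis
  qed
  have dn: "d n n = (\<lambda>_. 0)" for n unfolding d_def xv_n P0 by simp
  have "\<forall>k. m \<le> n \<longrightarrow> d n (n - m) = (\<lambda>_. 0)" for m n
  proof (induction m)
    case 0 then show ?case using dn by simp
  next
    case (Suc m)
    show ?case
    proof (intro allI impI)
      assume "Suc m \<le> n"
      then have "Suc (n - Suc m) = n - m" by simp
      then show "d n (n - Suc m) = (\<lambda>_. 0)" using Suc step[of n "n - Suc m"] \<open>Suc m \<le> n\<close> by simp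
    qed
  qed
  then have d0: "d n 0 = (\<lambda>_. 0)" for n by (metis diff_self_eq_0 order_refl)
  have Px: "P (xv j0 n 0) = xv j0 n 0" for n
  proof (rule ext)
    fix z show "P (xv j0 n 0) z = xv j0 n 0 z" using fun_cong[OF d0[of n], of z] unfolding d_def by simp
  qed
  define e where "e n = (\<lambda>z. IV (xv j0 n 0) z - P (xv j0 n 0) z)" for n
  have eeq: "e n = (\<lambda>(j, (m, i)). if j = j0 \<and> m = n \<and> i = n then -1 else 0)" if "n \<ge> 1" for n
    unfolding e_def Px IV_xv using that by (auto simp: xv_def)
  have el2: "e n \<in> l2 S" for n unfolding e_def IV_xv by (intro l2_diff Pl2 xl2)
  have We: "W (e n) = xv j0 n 0" for n
    using WT[OF xl2] unfolding e_def fun_diff_def by simp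
  have ne: "l2norm S (e n) = 1" if "n \<ge> 1" for n
  proof -
    have "l2norm S (e n) = sqrt (\<Sum>z\<in>{(j0, (n, n))}. (cmod (e n z))\<^sup>2)"
      by (rule l2norm_fin) (use that j0 in \<open>auto simp: eeq S_def Hidx_def split: if_splits\<close>)
    then show ?thesis using that by (simp add: eeq)
  qed
  have nx: "l2norm S (xv j0 n 0) = sqrt n" for n
  proof -
    have "l2norm S (xv j0 n 0) = sqrt (\<Sum>z\<in>(\<lambda>i. (j0, (n, i))) ` {1..n}. (cmod (xv j0 n 0 z))\<^sup>2)"
      by (rule l2norm_fin) (use j0 in \<open>auto simp: xv_def S_def Hidx_def split: if_splits\<close>)
    also have "(\<Sum>z\<in>(\<lambda>i. (j0, (n, i))) ` {1..n}. (cmod (xv j0 n 0 z))\<^sup>2) = (\<Sum>i\<in>{1..n}. 1)"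
      by (subst sum.reindex) (auto simp: inj_on_def xv_def)
    finally show ?thesis by simp
  qed
  define n where "n = nat (ceiling (C\<^sup>2)) + 1"
  have n1: "n \<ge> 1" unfolding n_def by simp
  have "sqrt n \<le> C" using C[OF el2, of n] We ne[OF n1] nx by simp
  moreover have "C\<^sup>2 < n" unfolding n_def by linarith
  then have "sqrt (C\<^sup>2) < sqrt n" by (simp only: real_sqrt_less_iff)
  then have "\<bar>C\<bar> < sqrt n" by simp
  ultimately show False by simp
qed

theorem lemma2p2:
  fixes J :: "'j set"
  assumes "J \<noteq> {}"
  shows "\<not> (\<exists>P. bounded_op (J \<times> Hidx) P \<and> idempotent_op (J \<times> Hidx) P \<and>
              (\<forall>f\<in>l2 (J \<times> Hidx). P (IV f) = IV (P f)) \<and>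
              invertible_op (J \<times> Hidx) (\<lambda>f x. IV f x - P f x))
         \<and> \<not> strongly_clean_op (J \<times> Hidx) IV"
proof -
  obtain j0 where j0: "j0 \<in> J" using assms by blast
  have A: "\<not> (\<exists>P. bounded_op (J \<times> Hidx) P \<and> idempotent_op (J \<times> Hidx) P \<and>
              (\<forall>f\<in>l2 (J \<times> Hidx). P (IV f) = IV (P f)) \<and>
              invertible_op (J \<times> Hidx) (\<lambda>f x. IV f x - P f x))"
    using main[OF j0] by blast
  moreover have "\<not> strongly_clean_op (J \<times> Hidx) IV"
  proof
    assume "strongly_clean_op (J \<times> Hidx) IV"
    then obtain U P where bP: "bounded_op (J \<times> Hidx) P" and iU: "invertible_op (J \<times> Hidx) U"
      and iP: "idempotent_op (J \<times> Hidx) P" and cP: "\<forall>f\<in>l2 (J \<times> Hidx). P (IV f) = IV (P f)"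
      and TU: "\<forall>f\<in>l2 (J \<times> Hidx). IV f = (\<lambda>x. U f x + P f x)"
      unfolding strongly_clean_op_def by blast
    have Ueq: "\<And>f. f \<in> l2 (J \<times> Hidx) \<Longrightarrow> (\<lambda>x. IV f x - P f x) = U f"
      using TU by (auto intro!: ext)
    obtain W where bW: "bounded_op (J \<times> Hidx) W" and
      W: "\<forall>f\<in>l2 (J \<times> Hidx). W (U f) = f \<and> U (W f) = f"
      using iU unfolding invertible_op_def by blast
    have "invertible_op (J \<times> Hidx) (\<lambda>f x. IV f x - P f x)"
      unfolding invertible_op_def
    proof (intro exI conjI ballI)
      show "bounded_op (J \<times> Hidx) W" by fact
    next
      fix f assume f: "f \<in> l2 (J \<times> Hidx)"
      show "W (\<lambda>x. IV f x - P f x) = f" using W f Ueq[OF f] by simp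
      have "W f \<in> l2 (J \<times> Hidx)" using bW f unfolding bounded_op_def by blast
      then show "(\<lambda>x. IV (W f) x - P (W f) x) = f" using Ueq W f by simp
    qed
    then show False using A bP iP cP by blast
  qed
  ultimately show ?thesis by blast
qed

end
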